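(* Let $\alpha\in\mathbb{Z}_2^n$ and $c\in\mathbb{Z}_2$. Then $$\max_{\beta,\gamma\in\mathbb{Z}_2^n}\mathrm{cadp}_c(\alpha,\beta,\gamma)\le\max_{\beta,\gamma\in\mathbb{Z}_2^n}\mathrm{cadp}_0(\alpha,\beta,\gamma)=\max_{\beta,\gamma\in\mathbb{Z}_2^n}\mathrm{adp}^{\oplus}(\alpha,\beta\to\gamma)=\mathrm{adp}^{\oplus}(\alpha,\alpha\to0).$$
   Context: For $x\in\mathbb{Z}_2^n$, $x=(x_0,\dots,x_{n-1})$ is identified with the integer $\sum_i x_i2^{n-1-i}$; $+$ is addition modulo $2^n$, $\oplus$ is bitwise XOR. $\mathrm{adp}^{\oplus}(\alpha,\beta\to\gamma)=4^{-n}\#\{(x,y): (x+\alpha)\oplus(y+\beta)=(x\oplus y)+\gamma\}$. Indices $0,\dots,7$ are identified with $\mathbb{Z}_2^3$ via $(p_0,p_1,p_2)\leftrightarrow4p_0+2p_1+p_2$; $e_0,\dots,e_7$ are the standard basis row vectors of $\mathbb{Q}^8$. $A_0$ is $\frac14$ times the $8\times8$ matrix with rows $(4,0,0,1,0,1,1,0)$, $(0,0,0,1,0,1,0,0)$, $(0,0,0,1,0,0,1,0)$, $(0,0,0,1,0,0,0,0)$, $(0,0,0,0,0,1,1,0)$, $(0,0,0,0,0,1,0,0)$, $(0,0,0,0,0,0,1,0)$, $(0,\dots,0)$, and $(A_k)_{i,j}=(A_0)_{i\oplus k,j\oplus k}$. For $\alpha,\beta,\gamma$ let $\omega_i=4\alpha_i+2\beta_i+\gamma_i$.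 With $L_0=(1,0,1,0,1,0,1,0)$, $L_1=(0,1,0,1,0,1,0,1)$, $\mathrm{cadp}_c(\alpha,\beta,\gamma)=L_cA_{\omega_0}\cdots A_{\omega_{n-1}}e_0^T$. (It is known that $\mathrm{adp}^{\oplus}(\alpha,\beta\to\gamma)=\mathrm{cadp}_0(\alpha,\beta,\gamma)+\mathrm{cadp}_1(\alpha,\beta,\gamma)$.) *)

theory Defs
  imports Main "HOL.Real"
begin

text \<open>Elements of Z_2^n are represented by natural numbers x < 2^n, with
  x = (x_0,...,x_{n-1}) identified with sum x_i 2^(n-1-i); hence the i-th
  coordinate x_i is the bit of x at position n-1-i.\<close>

definition coord :: "nat \<Rightarrow> nat \<Rightarrow> nat \<Rightarrow> nat" where
  "coord n x i = (if bit x (n - 1 - i) then 1 else 0)"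

definition adp_xor :: "nat \<Rightarrow> nat \<Rightarrow> nat \<Rightarrow> nat \<Rightarrow> real" where
  "adp_xor n \<alpha> \<beta> \<gamma> =
     real (card {(x, y). x < 2^n \<and> y < 2^n \<and>
        xor ((x + \<alpha>) mod 2^n) ((y + \<beta>) mod 2^n) = ((xor x y) + \<gamma>) mod 2^n})
     / 4 ^ n"

definition A0_rows :: "nat list list" where
  "A0_rows = [[4,0,0,1,0,1,1,0],
              [0,0,0,1,0,1,0,0],
              [0,0,0,1,0,0,1,0],
              [0,0,0,1,0,0,0,0],
              [0,0,0,0,0,1,1,0],
              [0,0,0,0,0,1,0,0],
              [0,0,0,0,0,0,1,0],
              [0,0,0,0,0,0,0,0]]"

definition A0 :: "nat \<Rightarrow> nat \<Rightarrow> real" where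
  "A0 i j = (if i < 8 \<and> j < 8 then real (A0_rows ! i ! j) / 4 else 0)"

definition Amat :: "nat \<Rightarrow> nat \<Rightarrow> nat \<Rightarrow> real" where
  "Amat k i j = A0 (xor i k) (xor j k)"

definition vecmat :: "(nat \<Rightarrow> real) \<Rightarrow> (nat \<Rightarrow> nat \<Rightarrow> real) \<Rightarrow> nat \<Rightarrow> real" where
  "vecmat v M = (\<lambda>j. \<Sum>i<8. v i * M i j)"

definition Lvec :: "nat \<Rightarrow> nat \<Rightarrow> real" where
  "Lvec c j = (if j < 8 \<and> j mod 2 = c then 1 else 0)"

definition omega :: "nat \<Rightarrow> nat \<Rightarrow> nat \<Rightarrow> nat \<Rightarrow> nat \<Rightarrow> nat" where
  "omega n \<alpha> \<beta> \<gamma> i = 4 * coord n \<alpha> i + 2 * coord n \<beta> i + coord n \<gamma> i"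

text \<open>cadp_c = L_c A_{w_0} ... A_{w_{n-1}} e_0^T\<close>
definition cadp :: "nat \<Rightarrow> nat \<Rightarrow> nat \<Rightarrow> nat \<Rightarrow> nat \<Rightarrow> real" where
  "cadp n c \<alpha> \<beta> \<gamma> =
     foldl (\<lambda>v i. vecmat v (Amat (omega n \<alpha> \<beta> \<gamma> i))) (Lvec c) [0..<n] 0"

end

theory Submission
  imports Defs
begin


lemma sum8: "(\<Sum>i<(8::nat). f i) = f 0 + f 1 + f 2 + f 3 + f 4 + f 5 + f 6 + (f 7::real)"
  by (simp add: eval_nat_numeral lessThan_Suc add.commute add.left_commute)

definition stp :: "(nat \<Rightarrow> real) \<Rightarrow> nat \<Rightarrow> nat \<Rightarrow> real" where
  "stp v w = vecmat v (Amat w)"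

definition Inv :: "real \<Rightarrow> real \<Rightarrow> (nat \<Rightarrow> real) \<Rightarrow> bool" where
  "Inv a b v \<longleftrightarrow> 0 \<le> v 0 \<and> 0 \<le> v 1 \<and> 0 \<le> v 2 \<and> 0 \<le> v 3 \<and> 0 \<le> v 4 \<and> 0 \<le> v 5 \<and> 0 \<le> v 6 \<and> 0 \<le> v 7
    \<and> v 0 \<le> a \<and> v 1 \<le> a \<and> v 2 \<le> a \<and> v 3 \<le> a \<and> v 4 \<le> b \<and> v 5 \<le> b \<and> v 6 \<le> b \<and> v 7 \<le> b
    \<and> v 0 + v 1 + v 4 + v 5 \<le> a + b \<and> v 2 + v 3 + v 6 + v 7 \<le> a + b
    \<and> v 0 + v 2 + v 4 + v 6 \<le> a + b \<and> v 1 + v 3 + v 5 + v 7 \<le> a + b"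

definition isW :: "real \<Rightarrow> real \<Rightarrow> real \<Rightarrow> (nat \<Rightarrow> real) \<Rightarrow> bool" where
  "isW a b d W \<longleftrightarrow> W 0 = a \<and> W 1 = 0 \<and> W 2 = 0 \<and> W 3 = d \<and> W 4 = 0 \<and> W 5 = d \<and> W 6 = b \<and> W 7 = 0"

lemma w8: "(w::nat) < 8 \<Longrightarrow> w = 0 \<or> w = 1 \<or> w = 2 \<or> w = 3 \<or> w = 4 \<or> w = 5 \<or> w = 6 \<or> w = 7"
  by auto

lemmas AS = stp_def vecmat_def sum8 Amat_def A0_def A0_rows_def

lemma inv_step:
  assumes "w < 8" "Inv a b v"
  shows "Inv (if w < 4 then a else (a+b)/4) (if w < 4 then (a+b)/4 else b) (stp v w)"
  using w8[OF assms(1)] assms(2)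
  by (elim disjE; simp add: AS Inv_def; (elim conjE)?; (intro conjI)?; argo)

lemma inv_first:
  assumes "w < 8" "\<forall>j<8. 0 \<le> v j \<and> v j \<le> 1"
  shows "Inv 1 1 (stp v w)"
proof -
  have "0 \<le> v 0 \<and> v 0 \<le> 1" "0 \<le> v 1 \<and> v 1 \<le> 1" "0 \<le> v 2 \<and> v 2 \<le> 1" "0 \<le> v 3 \<and> v 3 \<le> 1"
       "0 \<le> v 4 \<and> v 4 \<le> 1" "0 \<le> v 5 \<and> v 5 \<le> 1" "0 \<le> v 6 \<and> v 6 \<le> 1" "0 \<le> v 7 \<and> v 7 \<le> 1"
    using assms(2) by auto
  then show ?thesis using w8[OF assms(1)]
    by (elim disjE; simp add: AS Inv_def; (elim conjE)?; (intro conjI)?; linarith)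
qed

lemma W_step0: "isW a b d W \<Longrightarrow> isW a ((a+b)/4) ((a+d)/4) (stp W 0)"
  by (simp add: AS isW_def)
lemma W_step6: "isW a b d W \<Longrightarrow> isW ((a+b)/4) b ((b+d)/4) (stp W 6)"
  by (simp add: AS isW_def)
lemma W_first0: "isW 1 1 (1/2) (stp (Lvec 0) 0)"
  by (simp add: AS isW_def Lvec_def)
lemma W_first6: "isW 1 1 (1/2) (stp (Lvec 0) 6)"
  by (simp add: AS isW_def Lvec_def)



lemma main_inv:
  "(\<forall>w\<in>set ws. w < 8) \<Longrightarrow> Inv a b v \<Longrightarrow> isW a b d W \<Longrightarrow>
   foldl stp v ws 0 \<le> foldl stp W (map (\<lambda>w. 6 * (w div 4)) ws) 0"
proof (induction ws arbitrary: a b d v W)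
  case Nil
  then show ?case by (simp add: Inv_def isW_def)
next
  case (Cons w ws)
  have w8: "w < 8" using Cons.prems by simp
  show ?case
  proof (cases "w < 4")
    case True
    have "Inv a ((a+b)/4) (stp v w)" using inv_step[OF w8 Cons.prems(2)] True by simp
    moreover have "isW a ((a+b)/4) ((a+d)/4) (stp W (6 * (w div 4)))"
      using W_step0[OF Cons.prems(3)] True by simp
    ultimately show ?thesis using Cons.IH Cons.prems(1) by simp
  next
    case False
    have "Inv ((a+b)/4) b (stp v w)" using inv_step[OF w8 Cons.prems(2)] False by simp
    moreover have "w div 4 = 1" using False w8 by simp
    moreover have "isW ((a+b)/4) b ((b+d)/4) (stp W 6)"
      using W_step6[OF Cons.prems(3)] by simp
    ultimately show ?thesis using Cons.IH Cons.prems(1) by simp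
  qed
qed

lemma final_bound:
  assumes "\<forall>w\<in>set ws. w < 8" "\<forall>j<8. 0 \<le> v j \<and> v j \<le> 1"
  shows "foldl stp v ws 0 \<le> foldl stp (Lvec 0) (map (\<lambda>w. 6 * (w div 4)) ws) 0"
proof (cases ws)
  case Nil
  then show ?thesis using assms(2) by (simp add: Lvec_def)
next
  case (Cons w ws')
  have w8: "w < 8" using assms(1) Cons by simp
  have I: "Inv 1 1 (stp v w)" by (rule inv_first[OF w8 assms(2)])
  have W: "isW 1 1 (1/2) (stp (Lvec 0) (6 * (w div 4)))"
  proof (cases "w < 4")
    case True then show ?thesis using W_first0 by simp
  next
    case False then have "w div 4 = 1" using w8 by simp
    then show ?thesis using W_first6 by simp
  qed
  show ?thesis using main_inv[OF _ I W] assms(1) Cons by simp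
qed

lemma vecmat_add: "vecmat (\<lambda>j. u j + v j) M = (\<lambda>j. vecmat u M j + vecmat v M j)"
  by (simp add: vecmat_def sum.distrib algebra_simps)

lemma foldl_add: "foldl stp (\<lambda>j. u j + v j) ws = (\<lambda>j. foldl stp u ws j + foldl stp v ws j)"
  by (induction ws arbitrary: u v) (simp_all add: stp_def vecmat_add)



lemma xor_div2: "xor (p::nat) q div 2 = xor (p div 2) (q div 2)"
  by (subst xor_rec) simp

lemma xor_mod2: "xor (p::nat) q mod 2 = of_bool (odd p \<noteq> odd q)"
  by (subst xor_rec) simp

lemma xor_small: "(x0::nat) < 2 \<Longrightarrow> y0 < 2 \<Longrightarrow> xor x0 y0 = of_bool (odd x0 \<noteq> odd y0)"
  by (subst xor_rec) (auto simp: less_2_cases_iff)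

lemma xor_2: "(x0::nat) < 2 \<Longrightarrow> y0 < 2 \<Longrightarrow> xor (2*x'+x0) (2*y'+y0) = 2 * xor x' y' + xor x0 y0"
  apply (subst xor_rec)
  apply (subst xor_small, assumption+)
  apply (auto simp: less_2_cases_iff)
  done

lemma nat_eq_split: "(u::nat) = w \<longleftrightarrow> u mod 2 = w mod 2 \<and> u div 2 = w div 2"
  by (metis div_mult_mod_eq)

lemma mod_Suc_div2: "(U::nat) mod 2^Suc n div 2 = U div 2 mod 2^n"
  by (simp add: mod_mult2_eq)

lemma mod_Suc_mod2: "(U::nat) mod 2^Suc n mod 2 = U mod 2"
  by (simp add: mod_mod_cancel)

lemma xor_mod2': "xor (p::nat) q mod 2 = xor (p mod 2) (q mod 2)"
proof -
  have "xor (p mod 2) (q mod 2) = of_bool (odd (p mod 2) \<noteq> odd (q mod 2))"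
    by (rule xor_small) simp_all
  then show ?thesis by (simp add: xor_mod2)
qed

lemma cond_Suc:
  "(xor ((U::nat) mod 2^Suc n) (V mod 2^Suc n) = Z mod 2^Suc n) \<longleftrightarrow>
   (xor (U mod 2) (V mod 2) = Z mod 2 \<and> xor (U div 2 mod 2^n) (V div 2 mod 2^n) = Z div 2 mod 2^n)"
  apply (subst nat_eq_split)
  apply (simp only: xor_div2 xor_mod2' mod_Suc_div2 mod_Suc_mod2)
  done

definition Pc :: "nat \<Rightarrow> nat \<Rightarrow> nat \<Rightarrow> nat \<Rightarrow> nat \<Rightarrow> nat \<Rightarrow> nat \<Rightarrow> nat \<Rightarrow> nat \<Rightarrow> nat \<Rightarrow> bool" where
  "Pc n a b g c1 c2 c3 c x y \<longleftrightarrow>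
     xor ((x + a + c1) mod 2^n) ((y + b + c2) mod 2^n) = (xor x y + g + c3) mod 2^n
     \<and> (xor x y + g + c3) div 2^n mod 2 = c"

lemma Pc_Suc:
  assumes "x0 < 2" "y0 < 2"
  shows "Pc (Suc n) a b g c1 c2 c3 c (2*x'+x0) (2*y'+y0) \<longleftrightarrow>
    (xor ((x0 + a mod 2 + c1) mod 2) ((y0 + b mod 2 + c2) mod 2) = (xor x0 y0 + g mod 2 + c3) mod 2
     \<and> Pc n (a div 2) (b div 2) (g div 2) ((x0 + a mod 2 + c1) div 2) ((y0 + b mod 2 + c2) div 2)
          ((xor x0 y0 + g mod 2 + c3) div 2) c x' y')"
proof -
  have U: "2*x'+x0 + a + c1 = 2*(x' + a div 2) + (x0 + a mod 2 + c1)" by simp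
  have V: "2*y'+y0 + b + c2 = 2*(y' + b div 2) + (y0 + b mod 2 + c2)" by simp
  have Z: "xor (2*x'+x0) (2*y'+y0) + g + c3 = 2*(xor x' y' + g div 2) + (xor x0 y0 + g mod 2 + c3)"
    using xor_2[OF assms] by simp
  have D: "\<And>K r::nat. (2*K + r) div 2 = K + r div 2" "\<And>K r::nat. (2*K + r) mod 2 = r mod 2" by simp_all
  have C: "(Zz::nat) div 2^Suc n mod 2 = Zz div 2 div 2^n mod 2" for Zz
    by (simp add: div_mult2_eq)
  show ?thesis
    unfolding Pc_def cond_Suc C U V Z D
    by (simp add: add.assoc)
qed



definition lsbw :: "nat \<Rightarrow> nat \<Rightarrow> nat \<Rightarrow> nat \<Rightarrow> bool" where
  "lsbw w s x0 y0 \<longleftrightarrow> xor ((x0 + w div 4 + s div 4) mod 2) ((y0 + w div 2 mod 2 + s div 2 mod 2) mod 2)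
      = (xor x0 y0 + w mod 2 + s mod 2) mod 2"

definition nxt :: "nat \<Rightarrow> nat \<Rightarrow> nat \<Rightarrow> nat \<Rightarrow> nat" where
  "nxt w s x0 y0 = 4 * ((x0 + w div 4 + s div 4) div 2) + 2 * ((y0 + w div 2 mod 2 + s div 2 mod 2) div 2)
      + (xor x0 y0 + w mod 2 + s mod 2) div 2"

lemma table:
  assumes "w < 8" "s < 8"
  shows "4 * (\<Sum>i<8. f i * Amat w i s) =
    (if lsbw w s 0 0 then f (nxt w s 0 0) else 0) + (if lsbw w s 0 1 then f (nxt w s 0 1) else 0)
  + (if lsbw w s 1 0 then f (nxt w s 1 0) else 0) + (if lsbw w s 1 1 then f (nxt w s 1 1) else 0)"
  using w8[OF assms(1)] w8[OF assms(2)]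
  by (elim disjE; simp add: sum8 Amat_def A0_def A0_rows_def lsbw_def nxt_def; simp add: numeral_eq_Suc)



definition cnt :: "nat \<Rightarrow> nat \<Rightarrow> nat \<Rightarrow> nat \<Rightarrow> nat \<Rightarrow> nat \<Rightarrow> real" where
  "cnt n a b g s c = (\<Sum>x<2^n. \<Sum>y<2^n.
     if Pc n a b g (s div 4) (s div 2 mod 2) (s mod 2) c x y then 1 else 0)"

lemma sum_split2: "(\<Sum>x<2*m. f x) = (\<Sum>x<m. f (2*x)) + (\<Sum>x<m. f (2*x+1::nat)::real)"
  by (induction m) (simp_all add: algebra_simps)

lemma dec3: "d1 \<le> 1 \<Longrightarrow> d2 \<le> 1 \<Longrightarrow> d3 \<le> 1 \<Longrightarrow>
  (4*d1+2*d2+d3::nat) div 4 = d1 \<and> (4*d1+2*d2+d3) div 2 mod 2 = d2 \<and> (4*d1+2*d2+d3) mod 2 = d3"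
  by (auto simp: le_Suc_eq)

lemma Pc_Suc_s:
  fixes a b g :: nat
  assumes "x0 < 2" "y0 < 2" "s < 8"
  defines "w \<equiv> 4*(a mod 2)+2*(b mod 2)+g mod 2"
  shows "Pc (Suc n) a b g (s div 4) (s div 2 mod 2) (s mod 2) c (2*x'+x0) (2*y'+y0) \<longleftrightarrow>
    lsbw w s x0 y0 \<and> Pc n (a div 2) (b div 2) (g div 2) (nxt w s x0 y0 div 4) (nxt w s x0 y0 div 2 mod 2)
        (nxt w s x0 y0 mod 2) c x' y'"
proof -
  have w1: "w div 4 = a mod 2" "w div 2 mod 2 = b mod 2" "w mod 2 = g mod 2"
    using dec3[of "a mod 2" "b mod 2" "g mod 2"] unfolding w_def by auto
  have xs: "xor x0 y0 \<le> 1" using xor_small[OF assms(1,2)] by simp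
  have "s div 4 \<le> 1" using assms(3) by simp
  then have d: "(x0 + a mod 2 + s div 4) div 2 \<le> 1" "(y0 + b mod 2 + s div 2 mod 2) div 2 \<le> 1"
    "(xor x0 y0 + g mod 2 + s mod 2) div 2 \<le> 1"
    using assms(1,2) xs by linarith+
  show ?thesis
    unfolding Pc_Suc[OF assms(1,2)] lsbw_def nxt_def w1 using dec3[OF d] by simp
qed

lemma cnt_Suc:
  fixes a b g :: nat
  assumes "s < 8"
  defines "w \<equiv> 4*(a mod 2)+2*(b mod 2)+g mod 2"
  shows "cnt (Suc n) a b g s c =
    (if lsbw w s 0 0 then cnt n (a div 2) (b div 2) (g div 2) (nxt w s 0 0) c else 0)
  + (if lsbw w s 0 1 then cnt n (a div 2) (b div 2) (g div 2) (nxt w s 0 1) c else 0)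
  + (if lsbw w s 1 0 then cnt n (a div 2) (b div 2) (g div 2) (nxt w s 1 0) c else 0)
  + (if lsbw w s 1 1 then cnt n (a div 2) (b div 2) (g div 2) (nxt w s 1 1) c else 0)"
proof -
  define I where "I x y = (if Pc (Suc n) a b g (s div 4) (s div 2 mod 2) (s mod 2) c x y then 1 else (0::real))" for x y
  define T where "T x0 y0 = (\<Sum>x'<2^n. \<Sum>y'<2^n. I (2*x'+x0) (2*y'+y0))" for x0 y0
  have "cnt (Suc n) a b g s c = (\<Sum>x<2*2^n. \<Sum>y<2*2^n. I x y)"
    by (simp add: cnt_def I_def)
  also have "\<dots> = T 0 0 + T 0 1 + T 1 0 + T 1 1"
    by (simp add: sum_split2 sum.distrib T_def)
  finally have E: "cnt (Suc n) a b g s c = T 0 0 + T 0 1 + T 1 0 + T 1 1" .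
  have Tx: "T x0 y0 = (if lsbw w s x0 y0 then cnt n (a div 2) (b div 2) (g div 2) (nxt w s x0 y0) c else 0)"
    if "x0 < 2" "y0 < 2" for x0 y0
    unfolding T_def I_def Pc_Suc_s[OF that assms(1)] cnt_def w_def
    by (cases "lsbw (4*(a mod 2)+2*(b mod 2)+g mod 2) s x0 y0") simp_all
  show ?thesis unfolding E using Tx[of 0 0] Tx[of 0 1] Tx[of 1 0] Tx[of 1 1] by simp
qed



definition cvec :: "nat \<Rightarrow> nat \<Rightarrow> nat \<Rightarrow> nat \<Rightarrow> nat \<Rightarrow> nat \<Rightarrow> real" where
  "cvec n c a b g = foldl (\<lambda>v i. vecmat v (Amat (omega n a b g i))) (Lvec c) [0..<n]"

lemma cadp_cvec: "cadp n c a b g = cvec n c a b g 0"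
  by (simp add: cadp_def cvec_def)

lemma coord_Suc: "i < n \<Longrightarrow> coord (Suc n) x i = coord n (x div 2) i"
proof -
  assume "i < n"
  then have "Suc n - 1 - i = Suc (n - 1 - i)" by simp
  then show ?thesis by (simp add: coord_def bit_Suc)
qed

lemma coord_last: "coord (Suc n) x n = x mod 2"
  by (simp add: coord_def bit_0 odd_iff_mod_2_eq_one)

lemma cvec_Suc: "cvec (Suc n) c a b g =
  vecmat (cvec n c (a div 2) (b div 2) (g div 2)) (Amat (4*(a mod 2)+2*(b mod 2)+g mod 2))"
proof -
  have "foldl (\<lambda>v i. vecmat v (Amat (omega (Suc n) a b g i))) (Lvec c) [0..<n]
      = foldl (\<lambda>v i. vecmat v (Amat (omega n (a div 2) (b div 2) (g div 2) i))) (Lvec c) [0..<n]"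
    by (rule foldl_cong) (simp_all add: omega_def coord_Suc)
  then show ?thesis
    by (simp add: cvec_def omega_def coord_last)
qed

lemma cvec_cnt:
  "a < 2^n \<Longrightarrow> b < 2^n \<Longrightarrow> g < 2^n \<Longrightarrow> s < 8 \<Longrightarrow> cvec n c a b g s = cnt n a b g s c / 4^n"
proof (induction n arbitrary: a b g s)
  case 0
  then show ?case by (simp add: cvec_def cnt_def Pc_def Lvec_def)
next
  case (Suc n)
  define w where "w = 4*(a mod 2)+2*(b mod 2)+g mod 2"
  have w8: "w < 8" unfolding w_def by linarith
  have lt: "a div 2 < 2^n" "b div 2 < 2^n" "g div 2 < 2^n" using Suc.prems by auto
  define f where "f i = cnt n (a div 2) (b div 2) (g div 2) i c / 4^n" for i
  have "cvec (Suc n) c a b g s = (\<Sum>i<8. cvec n c (a div 2) (b div 2) (g div 2) i * Amat w i s)"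
    by (simp add: cvec_Suc vecmat_def w_def)
  also have "\<dots> = (\<Sum>i<8. f i * Amat w i s)"
    using Suc.IH[OF lt] by (intro sum.cong) (simp_all add: f_def)
  also have "\<dots> = (4 * (\<Sum>i<8. f i * Amat w i s)) / 4" by simp
  also have "\<dots> = cnt (Suc n) a b g s c / 4 ^ Suc n"
    unfolding table[OF w8 Suc.prems(4)] cnt_Suc[OF Suc.prems(4)]
    by (simp add: f_def add_divide_distrib w_def)
  finally show ?case .
qed

lemma card_pairs: "real (card {(x, y). x < (N::nat) \<and> y < N \<and> Q x y}) =
   (\<Sum>x<N. \<Sum>y<N. if Q x y then 1 else 0)"
proof -
  have fin: "\<forall>x\<in>{..<N}. finite {y \<in> {..<N}. Q x y}" by simp
  have "{(x, y). x < N \<and> y < N \<and> Q x y} = Sigma {..<N} (\<lambda>x. {y \<in> {..<N}. Q x y})" by auto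
  then have "card {(x, y). x < N \<and> y < N \<and> Q x y} = (\<Sum>x<N. card {y \<in> {..<N}. Q x y})"
    using card_SigmaI[OF finite_lessThan fin] by simp
  moreover have "real (card {y \<in> {..<N}. Q x y}) = (\<Sum>y<N. if Q x y then 1 else 0)" for x
  proof -
    have "{y \<in> {..<N}. Q x y} = {..<N} \<inter> Collect (Q x)" by auto
    then show ?thesis by (simp add: sum.If_cases)
  qed
  ultimately show ?thesis by simp
qed

lemma adp_cnt: "adp_xor n a b g = (cnt n a b g 0 0 + cnt n a b g 0 1) / 4^n"
proof -
  have "cnt n a b g 0 0 + cnt n a b g 0 1 =
     (\<Sum>x<2^n. \<Sum>y<2^n. if xor ((x + a) mod 2^n) ((y + b) mod 2^n) = (xor x y + g) mod 2^n then 1 else 0)"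
    unfolding cnt_def sum.distrib[symmetric] Pc_def
    by (intro sum.cong refl) auto
  then show ?thesis by (simp add: adp_xor_def card_pairs)
qed

lemma adp_cadp: "a < 2^n \<Longrightarrow> b < 2^n \<Longrightarrow> g < 2^n \<Longrightarrow> adp_xor n a b g = cadp n 0 a b g + cadp n 1 a b g"
  by (simp add: adp_cnt cadp_cvec cvec_cnt add_divide_distrib)

lemma cnt_nonneg: "0 \<le> cnt n a b g s c"
  unfolding cnt_def by (intro sum_nonneg) auto



lemma coord_le: "coord n x i \<le> 1" by (simp add: coord_def)

lemma omega_lt: "omega n a b g i < 8"
  using coord_le[of n a i] coord_le[of n b i] coord_le[of n g i] by (simp add: omega_def)

lemma cvec_foldl: "cvec n c a b g = foldl stp (Lvec c) (map (omega n a b g) [0..<n])"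
  by (simp add: cvec_def foldl_map stp_def)

lemma map_omega: "map (\<lambda>w. 6 * (w div 4)) (map (omega n a b g) [0..<n]) = map (omega n a a 0) [0..<n]"
proof -
  have "omega n a b g i div 4 = coord n a i" for i
    using coord_le[of n b i] coord_le[of n g i] by (simp add: omega_def)
  moreover have "coord n 0 i = 0" for i by (simp add: coord_def)
  ultimately show ?thesis by (simp add: omega_def)
qed

lemma K_gen:
  assumes "\<forall>j<8. 0 \<le> v j \<and> v j \<le> 1"
  shows "foldl stp v (map (omega n a b g) [0..<n]) 0 \<le> cadp n 0 a a 0"
proof -
  have "foldl stp v (map (omega n a b g) [0..<n]) 0
     \<le> foldl stp (Lvec 0) (map (\<lambda>w. 6 * (w div 4)) (map (omega n a b g) [0..<n])) 0"
    by (rule final_bound) (auto simp: omega_lt assms)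
  then show ?thesis unfolding map_omega cadp_cvec cvec_foldl .
qed

lemma K1: "c \<le> 1 \<Longrightarrow> cadp n c a b g \<le> cadp n 0 a a 0"
proof -
  have "\<forall>j<8. 0 \<le> Lvec c j \<and> Lvec c j \<le> 1" by (simp add: Lvec_def)
  from K_gen[OF this, of n a b g] show ?thesis by (simp only: cadp_cvec cvec_foldl)
qed

lemma K2: "a < 2^n \<Longrightarrow> b < 2^n \<Longrightarrow> g < 2^n \<Longrightarrow> adp_xor n a b g \<le> cadp n 0 a a 0"
proof -
  assume lt: "a < 2^n" "b < 2^n" "g < 2^n"
  have "adp_xor n a b g = foldl stp (\<lambda>j. Lvec 0 j + Lvec 1 j) (map (omega n a b g) [0..<n]) 0"
    using adp_cadp[OF lt] by (simp add: foldl_add cadp_cvec cvec_foldl)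
  also have "\<dots> \<le> cadp n 0 a a 0"
    by (rule K_gen) (simp add: Lvec_def)
  finally show ?thesis .
qed

lemma K3: "a < 2^n \<Longrightarrow> b < 2^n \<Longrightarrow> g < 2^n \<Longrightarrow> 0 \<le> cadp n c a b g"
  by (simp add: cadp_cvec cvec_cnt cnt_nonneg)

lemma fin_set: "finite {f b g | b g. b < (2::nat)^n \<and> g < (2::nat)^n}"
proof -
  have "{f b g | b g. b < (2::nat)^n \<and> g < (2::nat)^n} = (\<lambda>(b, g). f b g) ` ({..<2^n} \<times> {..<2^n})"
    by auto
  then show ?thesis by simp
qed

theorem lemma4:
  fixes n \<alpha> c :: nat
  assumes "\<alpha> < 2 ^ n" and "c \<le> 1"
  shows "Max {cadp n c \<alpha> \<beta> \<gamma> | \<beta> \<gamma>. \<beta> < 2 ^ n \<and> \<gamma> < 2 ^ n}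
           \<le> Max {cadp n 0 \<alpha> \<beta> \<gamma> | \<beta> \<gamma>. \<beta> < 2 ^ n \<and> \<gamma> < 2 ^ n}
       \<and> Max {cadp n 0 \<alpha> \<beta> \<gamma> | \<beta> \<gamma>. \<beta> < 2 ^ n \<and> \<gamma> < 2 ^ n}
           = Max {adp_xor n \<alpha> \<beta> \<gamma> | \<beta> \<gamma>. \<beta> < 2 ^ n \<and> \<gamma> < 2 ^ n}
       \<and> Max {adp_xor n \<alpha> \<beta> \<gamma> | \<beta> \<gamma>. \<beta> < 2 ^ n \<and> \<gamma> < 2 ^ n}
           = adp_xor n \<alpha> \<alpha> 0"
proof -
  define M where "M = cadp n 0 \<alpha> \<alpha> 0"
  define Sc where "Sc = {cadp n c \<alpha> \<beta> \<gamma> | \<beta> \<gamma>. \<beta> < 2 ^ n \<and> \<gamma> < (2::nat) ^ n}"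
  define S0 where "S0 = {cadp n 0 \<alpha> \<beta> \<gamma> | \<beta> \<gamma>. \<beta> < 2 ^ n \<and> \<gamma> < (2::nat) ^ n}"
  define SA where "SA = {adp_xor n \<alpha> \<beta> \<gamma> | \<beta> \<gamma>. \<beta> < 2 ^ n \<and> \<gamma> < (2::nat) ^ n}"
  have z: "(0::nat) < 2^n" by simp
  have fc: "finite Sc" "finite S0" "finite SA" unfolding Sc_def S0_def SA_def by (rule fin_set)+
  have M0: "M \<in> S0" unfolding S0_def M_def using assms(1) z by blast
  have A0: "adp_xor n \<alpha> \<alpha> 0 \<in> SA" unfolding SA_def using assms(1) z by blast
  have neC: "Sc \<noteq> {}" unfolding Sc_def using z by blast
  have allSc: "\<forall>x\<in>Sc. x \<le> M" unfolding Sc_def M_def using K1[OF assms(2)] by auto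
  have h1: "Max Sc \<le> M" using fc(1) neC allSc by (subst Max_le_iff) auto
  have h0: "Max S0 = M"
  proof (rule antisym)
    have allS0: "\<forall>x\<in>S0. x \<le> M" unfolding S0_def M_def using K1[of 0] by auto
    show "Max S0 \<le> M" using fc(2) M0 allS0 by (subst Max_le_iff) auto
    show "M \<le> Max S0" using fc(2) M0 by simp
  qed
  have allSA: "\<forall>x\<in>SA. x \<le> M" unfolding SA_def M_def using K2[OF assms(1)] by auto
  have hA1: "Max SA \<le> M" using fc(3) A0 allSA by (subst Max_le_iff) auto
  have hA2: "M \<le> adp_xor n \<alpha> \<alpha> 0"
    using adp_cadp[OF assms(1) assms(1) z] K3[OF assms(1) assms(1) z, of 1] unfolding M_def by simp
  have hA3: "adp_xor n \<alpha> \<alpha> 0 \<le> Max SA" using fc(3) A0 by simp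
  show ?thesis
    using h1 h0 hA1 hA2 hA3 unfolding Sc_def S0_def SA_def by linarith
qed

end
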